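(* There are ring homomorphisms $$\mathrm{B}(\mathcal{Q})\longrightarrow\mathrm{B}(\mathcal{R})\longrightarrow\mathrm{B}(\mathcal{Q})$$ whose composition is the identity of $\mathrm{B}(\mathcal{Q})$.
   Context: A rack is a set $R$ with a binary operation $\rhd$ such that every left multiplication $\ell_a\colon b\mapsto a\rhd b$ is a bijection and $a\rhd(b\rhd c)=(a\rhd b)\rhd(a\rhd c)$ for all $a,b,c$; a quandle is a rack with $a\rhd a=a$ for all $a$. A subrack is a subset $S$ with $\ell_s(S)=S$ for all $s\in S$; a decomposition of $R$ into $S$ and $T$ means $S,T$ are disjoint subracks (possibly empty) with $S\cup T=R$. The Burnside ring of finite racks $\mathrm{B}(\mathcal{R})$ is the abelian group generated by symbols $b(R)$, one for each finite rack $R$, subject to $b(R_1)=b(R_2)$ whenever $R_1\cong R_2$ and $b(R)=b(S)+b(T)$ whenever $R$ decomposes into $S$ and $T$, with ring structure $b(R)b(R')=b(R\times R')$ (cartesian product, componentwise operation) and unit the class of the singleton. The Burnside ring of finite quandles $\mathrm{B}(\mathcal{Q})$ is defined in the same way using only finite quandles. *)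

theory Defs
  imports "HOL-Algebra.Ring" "HOL-Library.Nat_Bijection"
begin

text \<open>A (concrete) finite rack is represented by a finite carrier A of naturals
  together with an operation on nat, normalised to be 0 outside A x A.
  Every finite rack is isomorphic to such a representation.\<close>

type_synonym rk = "nat set \<times> (nat \<Rightarrow> nat \<Rightarrow> nat)"

definition rack_on :: "nat set \<Rightarrow> (nat \<Rightarrow> nat \<Rightarrow> nat) \<Rightarrow> bool" where
  "rack_on A op \<longleftrightarrow>
     (\<forall>a\<in>A. bij_betw (op a) A A) \<and>
     (\<forall>a\<in>A. \<forall>b\<in>A. \<forall>c\<in>A. op a (op b c) = op (op a b) (op a c))"

definition quandle_on :: "nat set \<Rightarrow> (nat \<Rightarrow> nat \<Rightarrow> nat) \<Rightarrow> bool" where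
  "quandle_on A op \<longleftrightarrow> rack_on A op \<and> (\<forall>a\<in>A. op a a = a)"

definition normalised :: "rk \<Rightarrow> bool" where
  "normalised R \<longleftrightarrow> (\<forall>a b. (a \<notin> fst R \<or> b \<notin> fst R) \<longrightarrow> snd R a b = 0)"

definition FinRacks :: "rk set" where
  "FinRacks = {R. finite (fst R) \<and> rack_on (fst R) (snd R) \<and> normalised R}"

definition FinQuandles :: "rk set" where
  "FinQuandles = {R. finite (fst R) \<and> quandle_on (fst R) (snd R) \<and> normalised R}"

definition rack_iso :: "rk \<Rightarrow> rk \<Rightarrow> bool" where
  "rack_iso R R' \<longleftrightarrow> (\<exists>h. bij_betw h (fst R) (fst R') \<and>
     (\<forall>a\<in>fst R. \<forall>b\<in>fst R. h (snd R a b) = snd R' (h a) (h b)))"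

definition subrack :: "rk \<Rightarrow> nat set \<Rightarrow> bool" where
  "subrack R S \<longleftrightarrow> S \<subseteq> fst R \<and> (\<forall>s\<in>S. snd R s ` S = S)"

definition restr :: "rk \<Rightarrow> nat set \<Rightarrow> rk" where
  "restr R S = (S, \<lambda>a b. if a \<in> S \<and> b \<in> S then snd R a b else 0)"

definition rack_prod :: "rk \<Rightarrow> rk \<Rightarrow> rk" where
  "rack_prod R R' = (prod_encode ` (fst R \<times> fst R'),
     \<lambda>x y. if x \<in> prod_encode ` (fst R \<times> fst R') \<and> y \<in> prod_encode ` (fst R \<times> fst R')
           then prod_encode (snd R (fst (prod_decode x)) (fst (prod_decode y)),
                             snd R' (snd (prod_decode x)) (snd (prod_decode y)))
           else 0)"

definition unit_rack :: rk where
  "unit_rack = ({0}, \<lambda>_ _. 0)"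

definition free_ab :: "rk set \<Rightarrow> (rk \<Rightarrow> int) set" where
  "free_ab C = {f. finite {x. f x \<noteq> 0} \<and> {x. f x \<noteq> 0} \<subseteq> C}"

definition gen :: "rk \<Rightarrow> rk \<Rightarrow> int" where
  "gen x = (\<lambda>y. if y = x then 1 else 0)"

definition fadd :: "(rk \<Rightarrow> int) \<Rightarrow> (rk \<Rightarrow> int) \<Rightarrow> rk \<Rightarrow> int" where
  "fadd f g = (\<lambda>x. f x + g x)"

definition fsub :: "(rk \<Rightarrow> int) \<Rightarrow> (rk \<Rightarrow> int) \<Rightarrow> rk \<Rightarrow> int" where
  "fsub f g = (\<lambda>x. f x - g x)"

definition conv :: "(rk \<Rightarrow> int) \<Rightarrow> (rk \<Rightarrow> int) \<Rightarrow> rk \<Rightarrow> int" where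
  "conv f g = (\<lambda>z. \<Sum>x\<in>{x. f x \<noteq> 0}. \<Sum>y\<in>{y. g y \<noteq> 0}.
                   if rack_prod x y = z then f x * g y else 0)"

definition rels :: "rk set \<Rightarrow> (rk \<Rightarrow> int) set" where
  "rels C = {fsub (gen x) (gen y) | x y. x \<in> C \<and> y \<in> C \<and> rack_iso x y}
          \<union> {fsub (fsub (gen R) (gen (restr R S))) (gen (restr R (fst R - S))) | R S.
               R \<in> C \<and> subrack R S \<and> subrack R (fst R - S)}"

inductive_set relsub :: "rk set \<Rightarrow> (rk \<Rightarrow> int) set" for C where
  zero: "(\<lambda>_. 0) \<in> relsub C"
| plus: "f \<in> relsub C \<Longrightarrow> r \<in> rels C \<Longrightarrow> fadd f r \<in> relsub C"
| minus: "f \<in> relsub C \<Longrightarrow> r \<in> rels C \<Longrightarrow> fsub f r \<in> relsub C"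

definition cls :: "rk set \<Rightarrow> (rk \<Rightarrow> int) \<Rightarrow> (rk \<Rightarrow> int) set" where
  "cls C f = {g \<in> free_ab C. fsub f g \<in> relsub C}"

definition Burnside :: "rk set \<Rightarrow> (rk \<Rightarrow> int) set ring" where
  "Burnside C = \<lparr>carrier = cls C ` free_ab C,
     mult = (\<lambda>X Y. cls C (conv (SOME f. f \<in> X) (SOME g. g \<in> Y))),
     one = cls C (gen unit_rack),
     zero = cls C (\<lambda>_. 0),
     add = (\<lambda>X Y. cls C (fadd (SOME f. f \<in> X) (SOME g. g \<in> Y)))\<rparr>"

abbreviation "B_R \<equiv> Burnside FinRacks"
abbreviation "B_Q \<equiv> Burnside FinQuandles"

end

theory Submission
  imports Defs "HOL-Library.Function_Algebras"
begin

definition supp :: "(rk \<Rightarrow> int) \<Rightarrow> rk set" where "supp f = {x. f x \<noteq> 0}"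
definition fs :: "(rk \<Rightarrow> int) \<Rightarrow> bool" where "fs f \<longleftrightarrow> finite (supp f)"
definition smult :: "int \<Rightarrow> (rk \<Rightarrow> int) \<Rightarrow> rk \<Rightarrow> int" where "smult c f = (\<lambda>z. c * f z)"
definition LE :: "(rk \<Rightarrow> rk \<Rightarrow> int) \<Rightarrow> (rk \<Rightarrow> int) \<Rightarrow> rk \<Rightarrow> int" where
  "LE T f = (\<Sum>x\<in>supp f. smult (f x) (T x))"

lemma sum_apply: "(\<Sum>i\<in>A. F i) z = (\<Sum>i\<in>A. F i z)"
  by (induction A rule: infinite_finite_induct) auto

lemma fadd_eq: "fadd f g = f + g" by (simp add: fadd_def fun_eq_iff)
lemma fsub_eq: "fsub f g = f - g" by (simp add: fsub_def fun_eq_iff)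

lemma smult_apply[simp]: "smult c f z = c * f z" by (simp add: smult_def)
lemma smult_0[simp]: "smult 0 f = 0" "smult c 0 = 0" by (auto simp: smult_def fun_eq_iff)
lemma smult_add: "smult c (f + g) = smult c f + smult c g"
  by (simp add: smult_def fun_eq_iff algebra_simps)
lemma smult_add2: "smult (c + d) f = smult c f + smult d f"
  by (simp add: smult_def fun_eq_iff algebra_simps)
lemma smult_diff: "smult c (f - g) = smult c f - smult c g"
  by (simp add: smult_def fun_eq_iff algebra_simps)
lemma smult_diff2: "smult (c - d) f = smult c f - smult d f"
  by (simp add: smult_def fun_eq_iff algebra_simps)
lemma smult_smult: "smult c (smult d f) = smult (c * d) f"
  by (simp add: smult_def fun_eq_iff algebra_simps)
lemma smult_sum: "smult c (\<Sum>i\<in>A. h i) = (\<Sum>i\<in>A. smult c (h i))"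
  by (simp add: fun_eq_iff sum_apply sum_distrib_left)
lemma smult_1[simp]: "smult 1 f = f" by (simp add: smult_def)

lemma gen_apply: "gen x y = (if y = x then 1 else 0)" by (simp add: gen_def)
lemma supp_gen[simp]: "supp (gen x) = {x}" by (auto simp: supp_def gen_def)

lemma fs_zero[simp]: "fs 0" by (simp add: fs_def supp_def)
lemma fs_gen[simp]: "fs (gen x)" by (simp add: fs_def)
lemma supp_add: "supp (f + g) \<subseteq> supp f \<union> supp g" by (auto simp: supp_def)
lemma supp_diff: "supp (f - g) \<subseteq> supp f \<union> supp g" by (auto simp: supp_def)
lemma supp_uminus[simp]: "supp (- f) = supp f" by (auto simp: supp_def)
lemma supp_smult: "supp (smult c f) \<subseteq> supp f" by (auto simp: supp_def)
lemma fs_add[simp]: "fs f \<Longrightarrow> fs g \<Longrightarrow> fs (f + g)"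
  unfolding fs_def by (meson finite_UnI finite_subset supp_add)
lemma fs_diff[simp]: "fs f \<Longrightarrow> fs g \<Longrightarrow> fs (f - g)"
  unfolding fs_def by (meson finite_UnI finite_subset supp_diff)
lemma fs_uminus[simp]: "fs f \<Longrightarrow> fs (- f)" by (simp add: fs_def)
lemma fs_smult[simp]: "fs f \<Longrightarrow> fs (smult c f)"
  unfolding fs_def by (meson finite_subset supp_smult)
lemma supp_sum: "supp (\<Sum>i\<in>A. h i) \<subseteq> (\<Union>i\<in>A. supp (h i))"
  by (induction A rule: infinite_finite_induct) (use supp_add in \<open>auto simp: supp_def\<close>)
lemma fs_sum: "(\<And>i. i \<in> A \<Longrightarrow> fs (h i)) \<Longrightarrow> fs (\<Sum>i\<in>A. h i)"
  by (induction A rule: infinite_finite_induct) auto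

lemma supp_LE: "supp (LE T f) \<subseteq> (\<Union>x\<in>supp f. supp (T x))"
  unfolding LE_def using supp_sum supp_smult by fastforce
lemma fs_LE[simp]: "(\<And>x. fs (T x)) \<Longrightarrow> fs (LE T f)"
  unfolding LE_def by (rule fs_sum) auto

lemma LE_superset:
  assumes "finite A" "supp f \<subseteq> A"
  shows "LE T f = (\<Sum>x\<in>A. smult (f x) (T x))"
  unfolding LE_def
  by (rule sum.mono_neutral_left) (use assms in \<open>auto simp: supp_def\<close>)

lemma LE_add: assumes "fs f" "fs g" shows "LE T (f + g) = LE T f + LE T g"
proof -
  let ?A = "supp f \<union> supp g"
  have fin: "finite ?A" using assms by (simp add: fs_def)
  have "LE T (f + g) = (\<Sum>x\<in>?A. smult ((f+g) x) (T x))"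
    by (rule LE_superset[OF fin]) (use supp_add in auto)
  also have "\<dots> = (\<Sum>x\<in>?A. smult (f x) (T x)) + (\<Sum>x\<in>?A. smult (g x) (T x))"
    by (simp add: smult_add2 sum.distrib)
  also have "\<dots> = LE T f + LE T g"
    by (simp add: LE_superset[OF fin])
  finally show ?thesis .
qed

lemma LE_diff: assumes "fs f" "fs g" shows "LE T (f - g) = LE T f - LE T g"
proof -
  let ?A = "supp f \<union> supp g"
  have fin: "finite ?A" using assms by (simp add: fs_def)
  have "LE T (f - g) = (\<Sum>x\<in>?A. smult ((f-g) x) (T x))"
    by (rule LE_superset[OF fin]) (use supp_diff in auto)
  also have "\<dots> = (\<Sum>x\<in>?A. smult (f x) (T x)) - (\<Sum>x\<in>?A. smult (g x) (T x))"
    by (simp add: smult_diff2 sum_subtractf)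
  also have "\<dots> = LE T f - LE T g"
    by (simp add: LE_superset[OF fin])
  finally show ?thesis .
qed

lemma LE_zero[simp]: "LE T 0 = 0" by (simp add: LE_def supp_def)

lemma LE_gen[simp]: "LE T (gen a) = T a" by (simp add: LE_def gen_apply)

lemma LE_smult: "fs f \<Longrightarrow> LE T (smult c f) = smult c (LE T f)"
  apply (subst LE_superset[where A="supp f"])
  apply (auto simp: fs_def supp_def LE_def smult_sum smult_smult)
  done

lemma LE_sum: "finite A \<Longrightarrow> (\<And>i. i \<in> A \<Longrightarrow> fs (h i)) \<Longrightarrow> LE T (\<Sum>i\<in>A. h i) = (\<Sum>i\<in>A. LE T (h i))"
  by (induction A rule: finite_induct) (simp_all add: LE_add fs_sum)

lemma LE_LE: assumes "fs f" "\<And>x. fs (S x)" shows "LE T (LE S f) = LE (\<lambda>x. LE T (S x)) f"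
proof -
  have "LE T (LE S f) = (\<Sum>x\<in>supp f. LE T (smult (f x) (S x)))"
    unfolding LE_def[of S] using assms by (subst LE_sum) (auto simp: fs_def[symmetric])
  also have "\<dots> = LE (\<lambda>x. LE T (S x)) f"
    using assms by (simp add: LE_smult LE_def[of "\<lambda>x. LE T (S x)"])
  finally show ?thesis .
qed

lemma LE_Tadd: "LE (\<lambda>x. T1 x + T2 x) f = LE T1 f + LE T2 f"
  by (simp add: LE_def smult_add sum.distrib)
lemma LE_Tdiff: "LE (\<lambda>x. T1 x - T2 x) f = LE T1 f - LE T2 f"
  by (simp add: LE_def smult_diff sum_subtractf)
lemma LE_cong: "(\<And>x. x \<in> supp f \<Longrightarrow> T1 x = T2 x) \<Longrightarrow> LE T1 f = LE T2 f"
  by (simp add: LE_def)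

lemma conv_LE1: "conv f g = LE (\<lambda>x. LE (\<lambda>y. gen (rack_prod x y)) g) f"
  unfolding conv_def LE_def
  by (auto simp: fun_eq_iff sum_apply smult_def gen_def supp_def sum_distrib_left intro!: sum.cong)

lemma conv_LE2: "conv f g = LE (\<lambda>y. LE (\<lambda>x. gen (rack_prod x y)) f) g"
  apply (simp add: fun_eq_iff sum_apply conv_def LE_def flip: supp_def)
  apply (subst sum.swap)
  apply (auto simp: gen_def sum_distrib_left intro!: sum.cong)
  done


lemma lam0[simp]: "(\<lambda>_::rk. 0::int) = 0" by (simp add: fun_eq_iff)

lemma relsub_rels: "r \<in> rels C \<Longrightarrow> r \<in> relsub C"
  using relsub.plus[OF relsub.zero] by (simp add: fadd_eq)

lemma relsub_add: assumes "f \<in> relsub C" "g \<in> relsub C" shows "f + g \<in> relsub C"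
  using assms(2)
proof (induction g rule: relsub.induct)
  case zero then show ?case using assms(1) by simp
next
  case (plus g r)
  have "f + fadd g r = fadd (f + g) r" by (simp add: fadd_eq add.assoc)
  then show ?case using plus relsub.plus by metis
next
  case (minus g r)
  have "f + fsub g r = fsub (f + g) r" by (simp add: fsub_eq)
  then show ?case using minus relsub.minus by metis
qed

lemma relsub_zero[simp]: "0 \<in> relsub C"
  using relsub.zero by simp

lemma relsub_uminus: assumes "f \<in> relsub C" shows "- f \<in> relsub C"
  using assms
proof (induction f rule: relsub.induct)
  case zero then show ?case by simp
next
  case (plus g r)
  have "- fadd g r = fsub (- g) r" by (simp add: fadd_eq fsub_eq)
  then show ?case using plus relsub.minus by metis
next
  case (minus g r)
  have "- fsub g r = fadd (- g) r" by (simp add: fadd_eq fsub_eq)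
  then show ?case using minus relsub.plus by metis
qed

lemma relsub_diff: "f \<in> relsub C \<Longrightarrow> g \<in> relsub C \<Longrightarrow> f - g \<in> relsub C"
  using relsub_add[of f C "- g"] relsub_uminus[of g C] by simp

lemma relsub_smult_nat: "f \<in> relsub C \<Longrightarrow> smult (int n) f \<in> relsub C"
proof (induction n)
  case 0 then show ?case by simp
next
  case (Suc n)
  have "smult (int (Suc n)) f = smult (int n) f + f" by (simp add: smult_add2)
  then show ?case using Suc relsub_add by metis
qed

lemma relsub_smult: assumes "f \<in> relsub C" shows "smult c f \<in> relsub C"
proof (cases "c \<ge> 0")
  case True
  then obtain n where "c = int n" using nonneg_int_cases by blast
  then show ?thesis using relsub_smult_nat assms by simp
next
  case False
  define n where "n = nat (- c)"
  have n: "c = - int n" using False by (simp add: n_def)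
  have "smult c f = - smult (int n) f" by (simp add: n smult_def fun_eq_iff)
  then show ?thesis using relsub_smult_nat relsub_uminus assms by metis
qed

lemma relsub_sum: "(\<And>i. i \<in> A \<Longrightarrow> h i \<in> relsub C) \<Longrightarrow> (\<Sum>i\<in>A. h i) \<in> relsub C"
  by (induction A rule: infinite_finite_induct) (auto intro: relsub_add)

lemma relsub_LE: "(\<And>x. x \<in> supp f \<Longrightarrow> T x \<in> relsub C) \<Longrightarrow> LE T f \<in> relsub C"
  unfolding LE_def by (auto intro!: relsub_sum relsub_smult)

lemma rels_fs: "r \<in> rels C \<Longrightarrow> fs r"
  unfolding rels_def by (auto simp: fsub_eq)

lemma relsub_fs: "f \<in> relsub C \<Longrightarrow> fs f"
proof (induction f rule: relsub.induct)
  case (plus f r) then show ?case unfolding fadd_eq using rels_fs fs_add by blast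
next
  case (minus f r) then show ?case unfolding fsub_eq using rels_fs fs_diff by blast
qed simp

lemma rels_mono: "C \<subseteq> C' \<Longrightarrow> rels C \<subseteq> rels C'"
  unfolding rels_def by blast

lemma relsub_mono: assumes "C \<subseteq> C'" "f \<in> relsub C" shows "f \<in> relsub C'"
  using assms(2)
  by (induction f rule: relsub.induct) (use rels_mono[OF assms(1)] in \<open>auto intro: relsub.intros\<close>)

lemma relsub_lin:
  assumes "\<And>r. r \<in> rels C \<Longrightarrow> L r \<in> relsub C'"
    and "\<And>f g. fs f \<Longrightarrow> fs g \<Longrightarrow> L (f + g) = L f + L g"
    and "\<And>f g. fs f \<Longrightarrow> fs g \<Longrightarrow> L (f - g) = L f - L g"
    and "L 0 = 0"
    and "f \<in> relsub C"
  shows "L f \<in> relsub C'"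
  using assms(5)
proof (induction f rule: relsub.induct)
  case zero then show ?case using assms(4) by simp
next
  case (plus g r)
  then show ?case unfolding fadd_eq
    using assms(1,2) relsub_fs[OF plus.hyps(1)] rels_fs[OF plus.hyps(2)] relsub_add by metis
next
  case (minus g r)
  then show ?case unfolding fsub_eq
    using assms(1,3) relsub_fs[OF minus.hyps(1)] rels_fs[OF minus.hyps(2)] relsub_diff by metis
qed

lemma free_ab_iff: "f \<in> free_ab C \<longleftrightarrow> fs f \<and> supp f \<subseteq> C"
  by (simp add: free_ab_def fs_def supp_def)

definition rep :: "(rk \<Rightarrow> int) set \<Rightarrow> rk \<Rightarrow> int" where "rep X = (SOME f. f \<in> X)"

lemma cls_self: "f \<in> free_ab C \<Longrightarrow> f \<in> cls C f"
  by (simp add: cls_def fsub_eq)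

lemma cls_eq: assumes "f - g \<in> relsub C" shows "cls C f = cls C g"
proof -
  have "f - h \<in> relsub C \<longleftrightarrow> g - h \<in> relsub C" for h
  proof
    assume "f - h \<in> relsub C"
    then have "(f - h) - (f - g) \<in> relsub C" using assms relsub_diff by blast
    then show "g - h \<in> relsub C" by simp
  next
    assume "g - h \<in> relsub C"
    then have "(g - h) + (f - g) \<in> relsub C" using assms relsub_add by blast
    then show "f - h \<in> relsub C" by (simp add: algebra_simps)
  qed
  then show ?thesis by (simp add: cls_def fsub_eq)
qed

lemma rep_cls: assumes "f \<in> free_ab C"
  shows "rep (cls C f) \<in> free_ab C" "f - rep (cls C f) \<in> relsub C"
proof -
  have "rep (cls C f) \<in> cls C f" unfolding rep_def by (metis cls_self[OF assms] someI)
  then show "rep (cls C f) \<in> free_ab C" "f - rep (cls C f) \<in> relsub C"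
    by (auto simp: cls_def fsub_eq)
qed

lemma carrier_B: "carrier (Burnside C) = cls C ` free_ab C"
  by (simp add: Burnside_def)

lemma rep_carrier: assumes "X \<in> carrier (Burnside C)"
  shows "rep X \<in> free_ab C" "cls C (rep X) = X"
proof -
  obtain f where f: "f \<in> free_ab C" "X = cls C f" using assms by (auto simp: carrier_B)
  show "rep X \<in> free_ab C" using rep_cls f by simp
  show "cls C (rep X) = X" using rep_cls(2)[OF f(1)] f cls_eq
    by (metis minus_diff_eq relsub_uminus)
qed

lemma mult_B: "mult (Burnside C) X Y = cls C (conv (rep X) (rep Y))"
  by (simp add: Burnside_def rep_def)
lemma add_B: "add (Burnside C) X Y = cls C (rep X + rep Y)"
  by (simp add: Burnside_def rep_def fadd_eq)
lemma one_B: "one (Burnside C) = cls C (gen unit_rack)"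
  by (simp add: Burnside_def)


lemma rack_closed: "rack_on A op \<Longrightarrow> a \<in> A \<Longrightarrow> b \<in> A \<Longrightarrow> op a b \<in> A"
  unfolding rack_on_def by (meson bij_betw_apply)
lemma rack_inj: "rack_on A op \<Longrightarrow> a \<in> A \<Longrightarrow> inj_on (op a) A"
  unfolding rack_on_def by (meson bij_betw_imp_inj_on)
lemma rack_surj: "rack_on A op \<Longrightarrow> a \<in> A \<Longrightarrow> op a ` A = A"
  unfolding rack_on_def by (meson bij_betw_imp_surj_on)
lemma rack_dist: "rack_on A op \<Longrightarrow> a \<in> A \<Longrightarrow> b \<in> A \<Longrightarrow> c \<in> A \<Longrightarrow>
   op a (op b c) = op (op a b) (op a c)"
  unfolding rack_on_def by blast

lemma fin_bij: "finite X \<Longrightarrow> inj_on f X \<Longrightarrow> f ` X \<subseteq> X \<Longrightarrow> bij_betw f X X"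
  by (simp add: bij_betw_def endo_inj_surj)

lemma FinRacksD: "R \<in> FinRacks \<Longrightarrow> finite (fst R) \<and> rack_on (fst R) (snd R) \<and> normalised R"
  by (simp add: FinRacks_def)
lemma FinQuandles_sub: "FinQuandles \<subseteq> FinRacks"
  by (auto simp: FinRacks_def FinQuandles_def quandle_on_def)

lemma enc_cases: "u \<in> prod_encode ` (A \<times> B) \<Longrightarrow> (\<And>a b. u = prod_encode (a,b) \<Longrightarrow> a \<in> A \<Longrightarrow> b \<in> B \<Longrightarrow> P) \<Longrightarrow> P"
  by blast

lemma rack_prod_fst[simp]: "fst (rack_prod R R') = prod_encode ` (fst R \<times> fst R')"
  by (simp add: rack_prod_def)

lemma rack_prod_op[simp]: "a \<in> fst R \<Longrightarrow> b \<in> fst R' \<Longrightarrow> c \<in> fst R \<Longrightarrow> d \<in> fst R' \<Longrightarrow>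
  snd (rack_prod R R') (prod_encode (a, b)) (prod_encode (c, d)) = prod_encode (snd R a c, snd R' b d)"
  by (auto simp: rack_prod_def)

lemma rack_prod_norm: "normalised (rack_prod R R')"
  by (auto simp: normalised_def rack_prod_def)

lemma rack_prod_rack:
  assumes R: "finite (fst R)" "rack_on (fst R) (snd R)" and R': "finite (fst R')" "rack_on (fst R') (snd R')"
  shows "rack_on (fst (rack_prod R R')) (snd (rack_prod R R'))"
proof -
  let ?X = "prod_encode ` (fst R \<times> fst R')"
  have fin: "finite ?X" using R R' by simp
  have cl: "snd (rack_prod R R') u v \<in> ?X" if uv: "u \<in> ?X" "v \<in> ?X" for u v
  proof -
    obtain a b where m1: "u = prod_encode (a, b)" "a \<in> fst R" "b \<in> fst R'" by (rule enc_cases[OF uv(1)])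
    obtain c d where m2: "v = prod_encode (c, d)" "c \<in> fst R" "d \<in> fst R'" by (rule enc_cases[OF uv(2)])
    show ?thesis using m1 m2 rack_closed[OF R(2)] rack_closed[OF R'(2)] by simp
  qed
  have bij: "bij_betw (snd (rack_prod R R') u) ?X ?X" if u: "u \<in> ?X" for u
  proof (rule fin_bij[OF fin])
    obtain a b where ab: "u = prod_encode (a, b)" "a \<in> fst R" "b \<in> fst R'" by (rule enc_cases[OF u])
    show "inj_on (snd (rack_prod R R') u) ?X"
    proof (rule inj_onI)
      fix v w assume vw: "v \<in> ?X" "w \<in> ?X" and eq: "snd (rack_prod R R') u v = snd (rack_prod R R') u w"
      obtain c d where m1: "v = prod_encode (c, d)" "c \<in> fst R" "d \<in> fst R'" by (rule enc_cases[OF vw(1)])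
      obtain c' d' where m2: "w = prod_encode (c', d')" "c' \<in> fst R" "d' \<in> fst R'" by (rule enc_cases[OF vw(2)])
      note m1 m2
      with eq ab show "v = w"
        using rack_inj[OF R(2) ab(2)] rack_inj[OF R'(2) ab(3)] by (auto dest: inj_onD)
    qed
    show "snd (rack_prod R R') u ` ?X \<subseteq> ?X" by (rule image_subsetI) (rule cl[OF u])
  qed
  have dist: "snd (rack_prod R R') u (snd (rack_prod R R') v w) =
     snd (rack_prod R R') (snd (rack_prod R R') u v) (snd (rack_prod R R') u w)"
    if uvw: "u \<in> ?X" "v \<in> ?X" "w \<in> ?X" for u v w
  proof -
    obtain a b where m1: "u = prod_encode (a, b)" "a \<in> fst R" "b \<in> fst R'" by (rule enc_cases[OF uvw(1)])
    obtain c d where m2: "v = prod_encode (c, d)" "c \<in> fst R" "d \<in> fst R'" by (rule enc_cases[OF uvw(2)])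
    obtain e f where m3: "w = prod_encode (e, f)" "e \<in> fst R" "f \<in> fst R'" by (rule enc_cases[OF uvw(3)])
    note m = m1 m2 m3
    have e1: "snd R a (snd R c e) = snd R (snd R a c) (snd R a e)" using m by (intro rack_dist[OF R(2)])
    have e2: "snd R' b (snd R' d f) = snd R' (snd R' b d) (snd R' b f)" using m by (intro rack_dist[OF R'(2)])
    show ?thesis using m rack_closed[OF R(2)] rack_closed[OF R'(2)] by (simp add: e1 e2)
  qed
  show ?thesis unfolding rack_on_def using bij dist by simp
qed

lemma rack_prod_FinRacks: "R \<in> FinRacks \<Longrightarrow> R' \<in> FinRacks \<Longrightarrow> rack_prod R R' \<in> FinRacks"
  using rack_prod_rack rack_prod_norm by (auto simp: FinRacks_def)

lemma rack_prod_FinQuandles: assumes "R \<in> FinQuandles" "R' \<in> FinQuandles"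
  shows "rack_prod R R' \<in> FinQuandles"
proof -
  have "rack_prod R R' \<in> FinRacks" using assms FinQuandles_sub rack_prod_FinRacks by blast
  moreover have "\<forall>u\<in>fst (rack_prod R R'). snd (rack_prod R R') u u = u"
  proof
    fix u assume u: "u \<in> fst (rack_prod R R')"
    then obtain a b where "u = prod_encode (a, b)" "a \<in> fst R" "b \<in> fst R'"
      using u by (auto elim: enc_cases)
    then show "snd (rack_prod R R') u u = u" using assms by (simp add: FinQuandles_def quandle_on_def)
  qed
  ultimately show ?thesis by (simp add: FinRacks_def FinQuandles_def quandle_on_def)
qed

lemma bij_decode: "bij_betw prod_decode (prod_encode ` S) S"
  by (rule bij_betw_imageI) (auto simp: inj_on_def image_image)
lemma bij_encode: "bij_betw prod_encode S (prod_encode ` S)"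
  by (rule bij_betw_imageI) (auto simp: inj_on_def)

lemma iso_prod_left:
  assumes "rack_iso R1 R2" shows "rack_iso (rack_prod R1 Y) (rack_prod R2 Y)"
proof -
  obtain h where h: "bij_betw h (fst R1) (fst R2)"
    "\<forall>a\<in>fst R1. \<forall>b\<in>fst R1. h (snd R1 a b) = snd R2 (h a) (h b)"
    using assms by (auto simp: rack_iso_def)
  define k where "k = prod_encode \<circ> map_prod h id \<circ> prod_decode"
  have "bij_betw k (prod_encode ` (fst R1 \<times> fst Y)) (prod_encode ` (fst R2 \<times> fst Y))"
    unfolding k_def
    by (rule bij_betw_trans[OF bij_decode bij_betw_trans[OF bij_betw_map_prod[OF h(1) bij_betw_id] bij_encode]])
  moreover have "k (snd (rack_prod R1 Y) u v) = snd (rack_prod R2 Y) (k u) (k v)"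
    if uv: "u \<in> prod_encode ` (fst R1 \<times> fst Y)" "v \<in> prod_encode ` (fst R1 \<times> fst Y)" for u v
  proof -
    obtain a b where "u = prod_encode (a, b)" "a \<in> fst R1" "b \<in> fst Y" by (rule enc_cases[OF uv(1)])
    moreover obtain c d where "v = prod_encode (c, d)" "c \<in> fst R1" "d \<in> fst Y" by (rule enc_cases[OF uv(2)])
    ultimately show ?thesis using h bij_betw_apply[OF h(1)] by (simp add: k_def)
  qed
  ultimately show ?thesis unfolding rack_iso_def rack_prod_fst by blast
qed

lemma iso_prod_right:
  assumes "rack_iso R1 R2" shows "rack_iso (rack_prod Y R1) (rack_prod Y R2)"
proof -
  obtain h where h: "bij_betw h (fst R1) (fst R2)"
    "\<forall>a\<in>fst R1. \<forall>b\<in>fst R1. h (snd R1 a b) = snd R2 (h a) (h b)"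
    using assms by (auto simp: rack_iso_def)
  define k where "k = prod_encode \<circ> map_prod id h \<circ> prod_decode"
  have "bij_betw k (prod_encode ` (fst Y \<times> fst R1)) (prod_encode ` (fst Y \<times> fst R2))"
    unfolding k_def
    by (rule bij_betw_trans[OF bij_decode bij_betw_trans[OF bij_betw_map_prod[OF bij_betw_id h(1)] bij_encode]])
  moreover have "k (snd (rack_prod Y R1) u v) = snd (rack_prod Y R2) (k u) (k v)"
    if uv: "u \<in> prod_encode ` (fst Y \<times> fst R1)" "v \<in> prod_encode ` (fst Y \<times> fst R1)" for u v
  proof -
    obtain a b where "u = prod_encode (a, b)" "a \<in> fst Y" "b \<in> fst R1" by (rule enc_cases[OF uv(1)])
    moreover obtain c d where "v = prod_encode (c, d)" "c \<in> fst Y" "d \<in> fst R1" by (rule enc_cases[OF uv(2)])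
    ultimately show ?thesis using h bij_betw_apply[OF h(1)] by (simp add: k_def)
  qed
  ultimately show ?thesis unfolding rack_iso_def rack_prod_fst by blast
qed


lemma restr_fst[simp]: "fst (restr R S) = S" by (simp add: restr_def)
lemma restr_op[simp]: "a \<in> S \<Longrightarrow> b \<in> S \<Longrightarrow> snd (restr R S) a b = snd R a b"
  by (simp add: restr_def)
lemma restr_norm: "normalised (restr R S)" by (auto simp: normalised_def restr_def)
lemma restr_restr: "Y \<subseteq> X \<Longrightarrow> restr (restr R X) Y = restr R Y"
  by (auto simp: restr_def fun_eq_iff)
lemma restr_self: "normalised R \<Longrightarrow> restr R (fst R) = R"
  by (cases R) (auto simp: restr_def normalised_def fun_eq_iff)

lemma prod_restr_left: assumes "S \<subseteq> fst R"
  shows "rack_prod (restr R S) Y = restr (rack_prod R Y) (prod_encode ` (S \<times> fst Y))"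
proof -
  have "snd (rack_prod (restr R S) Y) u v = snd (restr (rack_prod R Y) (prod_encode ` (S \<times> fst Y))) u v" for u v
  proof (cases "u \<in> prod_encode ` (S \<times> fst Y) \<and> v \<in> prod_encode ` (S \<times> fst Y)")
    case True
    then obtain a b c d where "u = prod_encode (a, b)" "a \<in> S" "b \<in> fst Y"
      "v = prod_encode (c, d)" "c \<in> S" "d \<in> fst Y" by (auto elim!: enc_cases)
    then show ?thesis using assms by (auto simp: rack_prod_def restr_def)
  next
    case False
    then show ?thesis by (auto simp: rack_prod_def restr_def)
  qed
  then show ?thesis by (auto simp: rack_prod_def restr_def fun_eq_iff prod_eq_iff)
qed

lemma prod_restr_right: assumes "S \<subseteq> fst R"
  shows "rack_prod Y (restr R S) = restr (rack_prod Y R) (prod_encode ` (fst Y \<times> S))"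
proof -
  have "snd (rack_prod Y (restr R S)) u v = snd (restr (rack_prod Y R) (prod_encode ` (fst Y \<times> S))) u v" for u v
  proof (cases "u \<in> prod_encode ` (fst Y \<times> S) \<and> v \<in> prod_encode ` (fst Y \<times> S)")
    case True
    then obtain a b c d where "u = prod_encode (a, b)" "b \<in> S" "a \<in> fst Y"
      "v = prod_encode (c, d)" "d \<in> S" "c \<in> fst Y" by (auto elim!: enc_cases)
    then show ?thesis using assms by (auto simp: rack_prod_def restr_def)
  next
    case False
    then show ?thesis by (auto simp: rack_prod_def restr_def)
  qed
  then show ?thesis by (auto simp: rack_prod_def restr_def fun_eq_iff prod_eq_iff)
qed

lemma subrack_prod_left:
  assumes R: "R \<in> FinRacks" and Y: "Y \<in> FinRacks" and S: "subrack R S"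
  shows "subrack (rack_prod R Y) (prod_encode ` (S \<times> fst Y))"
proof -
  have SR: "S \<subseteq> fst R" and Ss: "\<And>s. s \<in> S \<Longrightarrow> snd R s ` S = S" using S by (auto simp: subrack_def)
  have rR: "rack_on (fst R) (snd R)" and rY: "rack_on (fst Y) (snd Y)" using R Y by (auto simp: FinRacks_def)
  have "snd (rack_prod R Y) s ` prod_encode ` (S \<times> fst Y) = prod_encode ` (S \<times> fst Y)"
    if s: "s \<in> prod_encode ` (S \<times> fst Y)" for s
  proof -
    obtain a b where ab: "s = prod_encode (a, b)" "a \<in> S" "b \<in> fst Y" by (rule enc_cases[OF s])
    show ?thesis
    proof
      show "snd (rack_prod R Y) s ` prod_encode ` (S \<times> fst Y) \<subseteq> prod_encode ` (S \<times> fst Y)"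
      proof
        fix x assume "x \<in> snd (rack_prod R Y) s ` prod_encode ` (S \<times> fst Y)"
        then obtain c d where cd: "c \<in> S" "d \<in> fst Y" "x = snd (rack_prod R Y) s (prod_encode (c, d))" by auto
        have "snd R a c \<in> S" using Ss[OF ab(2)] cd(1) by blast
        moreover have "snd Y b d \<in> fst Y" using rack_closed[OF rY ab(3) cd(2)] .
        moreover have "x = prod_encode (snd R a c, snd Y b d)"
          using ab cd SR by (simp add: subsetD)
        ultimately show "x \<in> prod_encode ` (S \<times> fst Y)" by auto
      qed
    next
      show "prod_encode ` (S \<times> fst Y) \<subseteq> snd (rack_prod R Y) s ` prod_encode ` (S \<times> fst Y)"
      proof
        fix x assume "x \<in> prod_encode ` (S \<times> fst Y)"
        then obtain c d where cd: "x = prod_encode (c, d)" "c \<in> S" "d \<in> fst Y" by (rule enc_cases)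
        obtain c' where c': "c' \<in> S" "c = snd R a c'" using Ss[OF ab(2)] cd(2) by blast
        obtain d' where d': "d' \<in> fst Y" "d = snd Y b d'" using rack_surj[OF rY ab(3)] cd(3) by blast
        have "x = snd (rack_prod R Y) s (prod_encode (c', d'))" using ab cd c' d' SR by (simp add: subsetD)
        then show "x \<in> snd (rack_prod R Y) s ` prod_encode ` (S \<times> fst Y)" using c' d' by auto
      qed
    qed
  qed
  then show ?thesis using SR by (auto simp: subrack_def)
qed

lemma subrack_prod_right:
  assumes R: "R \<in> FinRacks" and Y: "Y \<in> FinRacks" and S: "subrack R S"
  shows "subrack (rack_prod Y R) (prod_encode ` (fst Y \<times> S))"
proof -
  have SR: "S \<subseteq> fst R" and Ss: "\<And>s. s \<in> S \<Longrightarrow> snd R s ` S = S" using S by (auto simp: subrack_def)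
  have rR: "rack_on (fst R) (snd R)" and rY: "rack_on (fst Y) (snd Y)" using R Y by (auto simp: FinRacks_def)
  have "snd (rack_prod Y R) s ` prod_encode ` (fst Y \<times> S) = prod_encode ` (fst Y \<times> S)"
    if s: "s \<in> prod_encode ` (fst Y \<times> S)" for s
  proof -
    obtain b a where ab: "s = prod_encode (b, a)" "b \<in> fst Y" "a \<in> S" by (rule enc_cases[OF s])
    show ?thesis
    proof
      show "snd (rack_prod Y R) s ` prod_encode ` (fst Y \<times> S) \<subseteq> prod_encode ` (fst Y \<times> S)"
      proof
        fix x assume "x \<in> snd (rack_prod Y R) s ` prod_encode ` (fst Y \<times> S)"
        then obtain c d where cd: "c \<in> S" "d \<in> fst Y" "x = snd (rack_prod Y R) s (prod_encode (d, c))" by auto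
        have "snd R a c \<in> S" using Ss[OF ab(3)] cd(1) by blast
        moreover have "snd Y b d \<in> fst Y" using rack_closed[OF rY ab(2) cd(2)] .
        moreover have "x = prod_encode (snd Y b d, snd R a c)"
          using ab cd SR by (simp add: subsetD)
        ultimately show "x \<in> prod_encode ` (fst Y \<times> S)" by auto
      qed
    next
      show "prod_encode ` (fst Y \<times> S) \<subseteq> snd (rack_prod Y R) s ` prod_encode ` (fst Y \<times> S)"
      proof
        fix x assume "x \<in> prod_encode ` (fst Y \<times> S)"
        then obtain d c where cd: "x = prod_encode (d, c)" "d \<in> fst Y" "c \<in> S" by (rule enc_cases)
        obtain c' where c': "c' \<in> S" "c = snd R a c'" using Ss[OF ab(3)] cd(3) by blast
        obtain d' where d': "d' \<in> fst Y" "d = snd Y b d'" using rack_surj[OF rY ab(2)] cd(2) by blast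
        have "x = snd (rack_prod Y R) s (prod_encode (d', c'))" using ab cd c' d' SR by (simp add: subsetD)
        then show "x \<in> snd (rack_prod Y R) s ` prod_encode ` (fst Y \<times> S)" using c' d' by auto
      qed
    qed
  qed
  then show ?thesis using SR by (auto simp: subrack_def)
qed

lemma compl_left: "fst (rack_prod R Y) - prod_encode ` (S \<times> fst Y) = prod_encode ` ((fst R - S) \<times> fst Y)"
  by auto
lemma compl_right: "fst (rack_prod Y R) - prod_encode ` (fst Y \<times> S) = prod_encode ` (fst Y \<times> (fst R - S))"
  by auto


definition fixset :: "rk \<Rightarrow> nat set" where "fixset R = {a \<in> fst R. snd R a a = a}"
definition Fix :: "rk \<Rightarrow> rk" where "Fix R = restr R (fixset R)"

lemma fixset_sub: "fixset R \<subseteq> fst R" by (auto simp: fixset_def)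

lemma restr_FinRacks:
  assumes R: "R \<in> FinRacks" and S: "S \<subseteq> fst R" and cl: "\<And>a b. a \<in> S \<Longrightarrow> b \<in> S \<Longrightarrow> snd R a b \<in> S"
  shows "restr R S \<in> FinRacks"
proof -
  have fin: "finite S" and rR: "rack_on (fst R) (snd R)" using R S finite_subset by (auto simp: FinRacks_def)
  have bij: "bij_betw (snd (restr R S) a) S S" if a: "a \<in> S" for a
  proof -
    have "bij_betw (snd R a) S S"
    proof (rule fin_bij[OF fin])
      show "inj_on (snd R a) S" using rack_inj[OF rR] a S inj_on_subset by blast
      show "snd R a ` S \<subseteq> S" using cl a by blast
    qed
    moreover have "\<And>b. b \<in> S \<Longrightarrow> snd (restr R S) a b = snd R a b" using a by simp
    ultimately show ?thesis using bij_betw_cong by blast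
  qed
  have dist: "snd (restr R S) a (snd (restr R S) b c) =
      snd (restr R S) (snd (restr R S) a b) (snd (restr R S) a c)"
    if "a \<in> S" "b \<in> S" "c \<in> S" for a b c
  proof -
    have e: "snd R a (snd R b c) = snd R (snd R a b) (snd R a c)"
      using that S by (intro rack_dist[OF rR]) auto
    show ?thesis using that cl by (simp add: e)
  qed
  show ?thesis using fin bij dist restr_norm by (auto simp: FinRacks_def rack_on_def)
qed

lemma fixset_closed:
  assumes R: "R \<in> FinRacks" and a: "a \<in> fixset R" and b: "b \<in> fixset R"
  shows "snd R a b \<in> fixset R"
proof -
  have rR: "rack_on (fst R) (snd R)" using R by (auto simp: FinRacks_def)
  have A: "a \<in> fst R" "b \<in> fst R" and bb: "snd R b b = b" using a b by (auto simp: fixset_def)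
  have "snd R a (snd R b b) = snd R (snd R a b) (snd R a b)" by (rule rack_dist[OF rR A(1) A(2) A(2)])
  then show ?thesis using bb rack_closed[OF rR A] by (simp add: fixset_def)
qed

lemma Fix_FinQuandles: assumes R: "R \<in> FinRacks" shows "Fix R \<in> FinQuandles"
proof -
  have "Fix R \<in> FinRacks" unfolding Fix_def
    by (rule restr_FinRacks[OF R fixset_sub fixset_closed[OF R]])
  moreover have "\<forall>a\<in>fst (Fix R). snd (Fix R) a a = a" by (auto simp: Fix_def fixset_def)
  ultimately show ?thesis by (auto simp: FinRacks_def FinQuandles_def quandle_on_def)
qed

lemma Fix_quandle: assumes "R \<in> FinQuandles" shows "Fix R = R"
proof -
  have "fixset R = fst R" using assms by (auto simp: fixset_def FinQuandles_def quandle_on_def)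
  then show ?thesis using assms restr_self by (simp add: Fix_def FinQuandles_def)
qed

lemma unit_FinQuandles: "unit_rack \<in> FinQuandles"
  by (auto simp: FinQuandles_def unit_rack_def quandle_on_def rack_on_def normalised_def bij_betw_def)

lemma Fix_unit: "Fix unit_rack = unit_rack"
  using Fix_quandle unit_FinQuandles by blast

lemma Fix_iso:
  assumes R: "R \<in> FinRacks" and R': "R' \<in> FinRacks" and iso: "rack_iso R R'"
  shows "rack_iso (Fix R) (Fix R')"
proof -
  obtain h where h: "bij_betw h (fst R) (fst R')"
    "\<And>a b. a \<in> fst R \<Longrightarrow> b \<in> fst R \<Longrightarrow> h (snd R a b) = snd R' (h a) (h b)"
    using iso by (auto simp: rack_iso_def)
  have rR: "rack_on (fst R) (snd R)" using R by (auto simp: FinRacks_def)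
  have img: "h ` fixset R = fixset R'"
  proof
    show "h ` fixset R \<subseteq> fixset R'"
    proof
      fix x assume "x \<in> h ` fixset R"
      then obtain a where a: "a \<in> fixset R" "x = h a" by auto
      then have aA: "a \<in> fst R" "snd R a a = a" by (auto simp: fixset_def)
      have "snd R' (h a) (h a) = h a" using h(2)[OF aA(1) aA(1)] aA(2) by simp
      then show "x \<in> fixset R'" using a bij_betw_apply[OF h(1) aA(1)] by (simp add: fixset_def)
    qed
  next
    show "fixset R' \<subseteq> h ` fixset R"
    proof
      fix y assume y: "y \<in> fixset R'"
      then have yA: "y \<in> fst R'" "snd R' y y = y" by (auto simp: fixset_def)
      then obtain a where a: "a \<in> fst R" "y = h a" using h(1) by (auto simp: bij_betw_def)
      have "h (snd R a a) = h a" using h(2)[OF a(1) a(1)] yA a by simp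
      then have "snd R a a = a" using bij_betw_imp_inj_on[OF h(1)] rack_closed[OF rR a(1) a(1)] a(1)
        by (auto dest: inj_onD)
      then show "y \<in> h ` fixset R" using a by (auto simp: fixset_def)
    qed
  qed
  have "bij_betw h (fixset R) (fixset R')"
    using img inj_on_subset[OF bij_betw_imp_inj_on[OF h(1)] fixset_sub] by (simp add: bij_betw_def)
  moreover have "h (snd (Fix R) a b) = snd (Fix R') (h a) (h b)" if "a \<in> fixset R" "b \<in> fixset R" for a b
  proof -
    have "h a \<in> fixset R'" "h b \<in> fixset R'" using img that by auto
    moreover have "a \<in> fst R" "b \<in> fst R" using that fixset_sub[of R] by auto
    ultimately show ?thesis using that h(2) by (simp add: Fix_def)
  qed
  ultimately show ?thesis by (auto simp: rack_iso_def Fix_def)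
qed

lemma Fix_restr: "S \<subseteq> fst R \<Longrightarrow> Fix (restr R S) = restr R (S \<inter> fixset R)"
proof -
  assume S: "S \<subseteq> fst R"
  have "fixset (restr R S) = S \<inter> fixset R" using S by (auto simp: fixset_def)
  then show ?thesis by (simp add: Fix_def restr_restr)
qed

lemma restr_Fix: "T \<subseteq> fixset R \<Longrightarrow> restr (Fix R) T = restr R T"
  by (simp add: Fix_def restr_restr)

lemma subrack_Fix:
  assumes R: "R \<in> FinRacks" and S: "subrack R S"
  shows "subrack (Fix R) (fixset R \<inter> S)"
proof -
  have rR: "rack_on (fst R) (snd R)" and fin: "finite (fst R)" using R by (auto simp: FinRacks_def)
  have SR: "S \<subseteq> fst R" and Ss: "\<And>s. s \<in> S \<Longrightarrow> snd R s ` S = S" using S by (auto simp: subrack_def)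
  have "snd (Fix R) s ` (fixset R \<inter> S) = fixset R \<inter> S" if s: "s \<in> fixset R \<inter> S" for s
  proof -
    have "snd (Fix R) s ` (fixset R \<inter> S) = snd R s ` (fixset R \<inter> S)"
      using s by (auto simp: Fix_def)
    also have "\<dots> = fixset R \<inter> S"
    proof (rule endo_inj_surj)
      show "finite (fixset R \<inter> S)" using fin fixset_sub finite_subset by blast
      show "snd R s ` (fixset R \<inter> S) \<subseteq> fixset R \<inter> S"
        using fixset_closed[OF R] Ss s by blast
      show "inj_on (snd R s) (fixset R \<inter> S)"
        using rack_inj[OF rR] s fixset_sub inj_on_subset by (metis IntD1 inf.coboundedI1 subsetD)
    qed
    finally show ?thesis .
  qed
  then show ?thesis by (auto simp: subrack_def Fix_def)
qed

lemma Fix_prod: "Fix (rack_prod X Y) = rack_prod (Fix X) (Fix Y)"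
proof -
  have fs: "fixset (rack_prod X Y) = prod_encode ` (fixset X \<times> fixset Y)"
  proof
    show "fixset (rack_prod X Y) \<subseteq> prod_encode ` (fixset X \<times> fixset Y)"
    proof
      fix u assume u: "u \<in> fixset (rack_prod X Y)"
      then have u1: "u \<in> prod_encode ` (fst X \<times> fst Y)" "snd (rack_prod X Y) u u = u" by (auto simp: fixset_def)
      obtain a b where ab: "u = prod_encode (a, b)" "a \<in> fst X" "b \<in> fst Y" by (rule enc_cases[OF u1(1)])
      then have "snd X a a = a" "snd Y b b = b" using u1(2) by auto
      then show "u \<in> prod_encode ` (fixset X \<times> fixset Y)" using ab by (auto simp: fixset_def)
    qed
  next
    show "prod_encode ` (fixset X \<times> fixset Y) \<subseteq> fixset (rack_prod X Y)"
      by (auto simp: fixset_def)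
  qed
  have "snd (Fix (rack_prod X Y)) u v = snd (rack_prod (Fix X) (Fix Y)) u v" for u v
  proof (cases "u \<in> prod_encode ` (fixset X \<times> fixset Y) \<and> v \<in> prod_encode ` (fixset X \<times> fixset Y)")
    case True
    then obtain a b c d where "u = prod_encode (a, b)" "a \<in> fixset X" "b \<in> fixset Y"
      "v = prod_encode (c, d)" "c \<in> fixset X" "d \<in> fixset Y" by (auto elim!: enc_cases)
    then show ?thesis using fs fixset_sub[of X] fixset_sub[of Y]
      by (simp add: Fix_def subsetD)
  next
    case False
    then show ?thesis using fs by (auto simp: Fix_def rack_prod_def restr_def)
  qed
  then show ?thesis using fs by (auto simp: Fix_def fun_eq_iff prod_eq_iff)
qed


definition closedC :: "rk set \<Rightarrow> bool" where
  "closedC C \<longleftrightarrow> C \<subseteq> FinRacks \<and> (\<forall>x\<in>C. \<forall>y\<in>C. rack_prod x y \<in> C)"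

lemma closed_R: "closedC FinRacks" by (simp add: closedC_def rack_prod_FinRacks)
lemma closed_Q: "closedC FinQuandles" using FinQuandles_sub by (simp add: closedC_def rack_prod_FinQuandles)

lemma relsI_iso: "x \<in> C \<Longrightarrow> y \<in> C \<Longrightarrow> rack_iso x y \<Longrightarrow> gen x - gen y \<in> rels C"
  unfolding rels_def fsub_eq by blast

lemma relsI_dec: "R \<in> C \<Longrightarrow> subrack R S \<Longrightarrow> subrack R (fst R - S) \<Longrightarrow>
  gen R - gen (restr R S) - gen (restr R (fst R - S)) \<in> rels C"
  unfolding rels_def fsub_eq by blast

lemma relsE: "r \<in> rels C \<Longrightarrow>
  (\<And>x y. r = gen x - gen y \<Longrightarrow> x \<in> C \<Longrightarrow> y \<in> C \<Longrightarrow> rack_iso x y \<Longrightarrow> P) \<Longrightarrow>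
  (\<And>R S. r = gen R - gen (restr R S) - gen (restr R (fst R - S)) \<Longrightarrow> R \<in> C \<Longrightarrow> subrack R S \<Longrightarrow> subrack R (fst R - S) \<Longrightarrow> P) \<Longrightarrow> P"
  unfolding rels_def fsub_eq by blast

lemma subrack_sub: "subrack R S \<Longrightarrow> S \<subseteq> fst R" by (simp add: subrack_def)

lemma conv_rels_right:
  assumes C: "closedC C" and b: "b \<in> free_ab C" and r: "r \<in> rels C"
  shows "conv r b \<in> relsub C"
proof -
  have CR: "C \<subseteq> FinRacks" and cl: "\<And>x y. x \<in> C \<Longrightarrow> y \<in> C \<Longrightarrow> rack_prod x y \<in> C"
    using C by (auto simp: closedC_def)
  have Ty: "LE (\<lambda>x. gen (rack_prod x y)) r \<in> relsub C" if y: "y \<in> C" for y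
    using r
  proof (rule relsE)
    fix x1 x2 assume *: "r = gen x1 - gen x2" "x1 \<in> C" "x2 \<in> C" "rack_iso x1 x2"
    have "LE (\<lambda>x. gen (rack_prod x y)) r = gen (rack_prod x1 y) - gen (rack_prod x2 y)"
      using * by (simp add: LE_diff)
    also have "\<dots> \<in> rels C" using * y cl iso_prod_left by (intro relsI_iso) auto
    finally show ?thesis by (rule relsub_rels)
  next
    fix R S assume *: "r = gen R - gen (restr R S) - gen (restr R (fst R - S))" "R \<in> C"
      "subrack R S" "subrack R (fst R - S)"
    let ?R = "rack_prod R y" and ?S = "prod_encode ` (S \<times> fst y)"
    have "LE (\<lambda>x. gen (rack_prod x y)) r =
        gen (rack_prod R y) - gen (rack_prod (restr R S) y) - gen (rack_prod (restr R (fst R - S)) y)"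
      using * by (simp add: LE_diff)
    also have "\<dots> = gen ?R - gen (restr ?R ?S) - gen (restr ?R (fst ?R - ?S))"
      using * by (simp only: prod_restr_left subrack_sub compl_left)
    also have "\<dots> \<in> rels C"
    proof (rule relsI_dec)
      show "?R \<in> C" using * y cl by auto
      have RR: "R \<in> FinRacks" "y \<in> FinRacks" using * y CR by auto
      show "subrack ?R ?S" using subrack_prod_left[OF RR *(3)] .
      show "subrack ?R (fst ?R - ?S)" unfolding compl_left using subrack_prod_left[OF RR *(4)] .
    qed
    finally show ?thesis by (rule relsub_rels)
  qed
  show ?thesis unfolding conv_LE2
    by (rule relsub_LE, rule Ty) (use b in \<open>auto simp: free_ab_iff\<close>)
qed

lemma conv_rels_left:
  assumes C: "closedC C" and b: "b \<in> free_ab C" and r: "r \<in> rels C"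
  shows "conv b r \<in> relsub C"
proof -
  have CR: "C \<subseteq> FinRacks" and cl: "\<And>x y. x \<in> C \<Longrightarrow> y \<in> C \<Longrightarrow> rack_prod x y \<in> C"
    using C by (auto simp: closedC_def)
  have Ty: "LE (\<lambda>x. gen (rack_prod y x)) r \<in> relsub C" if y: "y \<in> C" for y
    using r
  proof (rule relsE)
    fix x1 x2 assume *: "r = gen x1 - gen x2" "x1 \<in> C" "x2 \<in> C" "rack_iso x1 x2"
    have "LE (\<lambda>x. gen (rack_prod y x)) r = gen (rack_prod y x1) - gen (rack_prod y x2)"
      using * by (simp add: LE_diff)
    also have "\<dots> \<in> rels C" using * y cl iso_prod_right by (intro relsI_iso) auto
    finally show ?thesis by (rule relsub_rels)
  next
    fix R S assume *: "r = gen R - gen (restr R S) - gen (restr R (fst R - S))" "R \<in> C"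
      "subrack R S" "subrack R (fst R - S)"
    let ?R = "rack_prod y R" and ?S = "prod_encode ` (fst y \<times> S)"
    have "LE (\<lambda>x. gen (rack_prod y x)) r =
        gen (rack_prod y R) - gen (rack_prod y (restr R S)) - gen (rack_prod y (restr R (fst R - S)))"
      using * by (simp add: LE_diff)
    also have "\<dots> = gen ?R - gen (restr ?R ?S) - gen (restr ?R (fst ?R - ?S))"
      using * by (simp only: prod_restr_right subrack_sub compl_right)
    also have "\<dots> \<in> rels C"
    proof (rule relsI_dec)
      show "?R \<in> C" using * y cl by auto
      have RR: "R \<in> FinRacks" "y \<in> FinRacks" using * y CR by auto
      show "subrack ?R ?S" using subrack_prod_right[OF RR *(3)] .
      show "subrack ?R (fst ?R - ?S)" unfolding compl_right using subrack_prod_right[OF RR *(4)] .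
    qed
    finally show ?thesis by (rule relsub_rels)
  qed
  show ?thesis unfolding conv_LE1
    by (rule relsub_LE, rule Ty) (use b in \<open>auto simp: free_ab_iff\<close>)
qed

lemma conv_add_left: "fs f \<Longrightarrow> fs g \<Longrightarrow> conv (f + g) h = conv f h + conv g h"
  unfolding conv_LE1 by (simp add: LE_add)
lemma conv_diff_left: "fs f \<Longrightarrow> fs g \<Longrightarrow> conv (f - g) h = conv f h - conv g h"
  unfolding conv_LE1 by (simp add: LE_diff)
lemma conv_add_right: "fs f \<Longrightarrow> fs g \<Longrightarrow> conv h (f + g) = conv h f + conv h g"
  unfolding conv_LE2 by (simp add: LE_add)
lemma conv_diff_right: "fs f \<Longrightarrow> fs g \<Longrightarrow> conv h (f - g) = conv h f - conv h g"
  unfolding conv_LE2 by (simp add: LE_diff)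
lemma conv_zero_left: "conv 0 h = 0" unfolding conv_LE1 by simp
lemma conv_zero_right: "conv h 0 = 0" unfolding conv_LE2 by simp

lemma conv_relsub_right:
  assumes C: "closedC C" and b: "b \<in> free_ab C" and r: "r \<in> relsub C"
  shows "conv r b \<in> relsub C"
  by (rule relsub_lin[where L="\<lambda>f. conv f b", OF conv_rels_right[OF C b] conv_add_left conv_diff_left
        conv_zero_left r])

lemma conv_relsub_left:
  assumes C: "closedC C" and b: "b \<in> free_ab C" and r: "r \<in> relsub C"
  shows "conv b r \<in> relsub C"
  by (rule relsub_lin[where L="\<lambda>f. conv b f", OF conv_rels_left[OF C b] conv_add_right conv_diff_right
        conv_zero_right r])

lemma fs_conv: "fs (conv f g)"
  unfolding conv_LE1 by (rule fs_LE) (rule fs_LE, simp)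

lemma conv_free: assumes C: "closedC C" and f: "f \<in> free_ab C" and g: "g \<in> free_ab C"
  shows "conv f g \<in> free_ab C"
proof -
  have cl: "\<And>x y. x \<in> C \<Longrightarrow> y \<in> C \<Longrightarrow> rack_prod x y \<in> C" using C by (auto simp: closedC_def)
  have "supp (conv f g) \<subseteq> C"
  proof
    fix z assume "z \<in> supp (conv f g)"
    then obtain x where x: "x \<in> supp f" "z \<in> supp (LE (\<lambda>y. gen (rack_prod x y)) g)"
      unfolding conv_LE1 using supp_LE by blast
    then obtain y where y: "y \<in> supp g" "z \<in> supp (gen (rack_prod x y))" using supp_LE by blast
    have "x \<in> C" "y \<in> C" using x(1) y(1) f g by (auto simp: free_ab_iff)
    moreover have "z = rack_prod x y" using y(2) by simp
    ultimately show "z \<in> C" using cl by simp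
  qed
  then show ?thesis using fs_conv by (simp add: free_ab_iff)
qed

lemma conv_cong:
  assumes C: "closedC C" and a: "a \<in> free_ab C" "a' \<in> free_ab C" and b: "b \<in> free_ab C" "b' \<in> free_ab C"
    and ra: "a - a' \<in> relsub C" and rb: "b - b' \<in> relsub C"
  shows "conv a b - conv a' b' \<in> relsub C"
proof -
  have fs: "fs a" "fs a'" "fs b" "fs b'" using a b by (auto simp: free_ab_iff)
  have "conv a b - conv a' b' = conv (a - a') b + conv a' (b - b')"
    using fs by (simp add: conv_diff_left conv_diff_right)
  moreover have "conv (a - a') b \<in> relsub C" by (rule conv_relsub_right[OF C b(1) ra])
  moreover have "conv a' (b - b') \<in> relsub C" by (rule conv_relsub_left[OF C a(2) rb])
  ultimately show ?thesis using relsub_add by metis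
qed


definition push :: "(rk \<Rightarrow> int) \<Rightarrow> rk \<Rightarrow> int" where "push f = LE (\<lambda>x. gen (Fix x)) f"

lemma push_add: "fs f \<Longrightarrow> fs g \<Longrightarrow> push (f + g) = push f + push g"
  by (simp add: push_def LE_add)
lemma push_diff: "fs f \<Longrightarrow> fs g \<Longrightarrow> push (f - g) = push f - push g"
  by (simp add: push_def LE_diff)
lemma push_zero: "push 0 = 0" by (simp add: push_def)
lemma push_gen: "push (gen x) = gen (Fix x)" by (simp add: push_def)
lemma fs_push: "fs (push f)" by (simp add: push_def)

lemma push_free: assumes "f \<in> free_ab FinRacks" shows "push f \<in> free_ab FinQuandles"
proof -
  have "supp (push f) \<subseteq> FinQuandles"
  proof
    fix z assume "z \<in> supp (push f)"
    then obtain x where "x \<in> supp f" "z \<in> supp (gen (Fix x))" unfolding push_def using supp_LE by blast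
    moreover have "\<And>x. x \<in> supp f \<Longrightarrow> x \<in> FinRacks" using assms unfolding free_ab_iff by blast
    ultimately show "z \<in> FinQuandles" using Fix_FinQuandles by simp
  qed
  then show ?thesis using fs_push by (simp add: free_ab_iff)
qed

lemma push_rels: assumes r: "r \<in> rels FinRacks" shows "push r \<in> relsub FinQuandles"
  using r
proof (rule relsE)
  fix x y assume *: "r = gen x - gen y" "x \<in> FinRacks" "y \<in> FinRacks" "rack_iso x y"
  have "push r = gen (Fix x) - gen (Fix y)" using * by (simp add: push_diff push_gen)
  also have "\<dots> \<in> rels FinQuandles" using * Fix_FinQuandles Fix_iso by (intro relsI_iso) auto
  finally show ?thesis by (rule relsub_rels)
next
  fix R S assume *: "r = gen R - gen (restr R S) - gen (restr R (fst R - S))" "R \<in> FinRacks"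
    "subrack R S" "subrack R (fst R - S)"
  let ?T = "fixset R \<inter> S"
  have SR: "S \<subseteq> fst R" using *(3) by (rule subrack_sub)
  have f1: "Fix (restr R S) = restr (Fix R) ?T"
    using SR by (simp add: Fix_restr restr_Fix Int_commute)
  have e: "fst (Fix R) - ?T = fixset R \<inter> (fst R - S)" using fixset_sub[of R] by (auto simp: Fix_def)
  have f2: "Fix (restr R (fst R - S)) = restr (Fix R) (fst (Fix R) - ?T)"
    unfolding e by (simp add: Fix_restr restr_Fix Int_commute)
  have "push r = gen (Fix R) - gen (Fix (restr R S)) - gen (Fix (restr R (fst R - S)))"
    using * by (simp add: push_diff push_gen)
  also have "\<dots> = gen (Fix R) - gen (restr (Fix R) ?T) - gen (restr (Fix R) (fst (Fix R) - ?T))"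
    by (simp only: f1 f2)
  also have "\<dots> \<in> rels FinQuandles"
  proof (rule relsI_dec)
    show "Fix R \<in> FinQuandles" using * Fix_FinQuandles by auto
    show "subrack (Fix R) ?T" using subrack_Fix[OF *(2) *(3)] .
    show "subrack (Fix R) (fst (Fix R) - ?T)" unfolding e using subrack_Fix[OF *(2) *(4)] .
  qed
  finally show ?thesis by (rule relsub_rels)
qed

lemma push_relsub: "r \<in> relsub FinRacks \<Longrightarrow> push r \<in> relsub FinQuandles"
  by (rule relsub_lin[where L=push, OF push_rels push_add push_diff push_zero])

lemma LE_gen_id: assumes "fs f" shows "LE gen f = f"
proof
  fix z
  have "LE gen f z = (\<Sum>x\<in>supp f. f x * gen x z)" by (simp add: LE_def sum_apply)
  also have "\<dots> = (\<Sum>x\<in>supp f. if x = z then f x else 0)" by (rule sum.cong) (auto simp: gen_def)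
  also have "\<dots> = f z" using assms by (simp add: fs_def) (simp add: supp_def)
  finally show "LE gen f z = f z" .
qed

lemma push_quandle: assumes "f \<in> free_ab FinQuandles" shows "push f = f"
proof -
  have "push f = LE gen f" unfolding push_def
    by (rule LE_cong) (use assms Fix_quandle in \<open>auto simp: free_ab_iff\<close>)
  then show ?thesis using assms LE_gen_id by (simp add: free_ab_iff)
qed

lemma push_conv: assumes "fs f" "fs g" shows "push (conv f g) = conv (push f) (push g)"
proof -
  have "push (conv f g) = LE (\<lambda>x. push (LE (\<lambda>y. gen (rack_prod x y)) g)) f"
    unfolding push_def conv_LE1 using assms by (simp add: LE_LE)
  also have "\<dots> = LE (\<lambda>x. LE (\<lambda>y. gen (rack_prod (Fix x) (Fix y))) g) f"
    unfolding push_def using assms by (simp add: LE_LE Fix_prod)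
  finally have 1: "push (conv f g) = LE (\<lambda>x. LE (\<lambda>y. gen (rack_prod (Fix x) (Fix y))) g) f" .
  have "conv (push f) (push g) = LE (\<lambda>x. LE (\<lambda>v. gen (rack_prod (Fix x) v)) (push g)) f"
    unfolding conv_LE1 push_def[of f] using assms by (simp add: LE_LE)
  also have "\<dots> = LE (\<lambda>x. LE (\<lambda>y. gen (rack_prod (Fix x) (Fix y))) g) f"
    unfolding push_def using assms by (simp add: LE_LE)
  finally show ?thesis using 1 by simp
qed

lemma free_mono: "free_ab FinQuandles \<subseteq> free_ab FinRacks"
proof
  fix f assume "f \<in> free_ab FinQuandles"
  then have "fs f" "supp f \<subseteq> FinQuandles" by (simp_all add: free_ab_iff)
  then show "f \<in> free_ab FinRacks" using FinQuandles_sub by (simp add: free_ab_iff)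
qed

lemma gen_unit_free: "gen unit_rack \<in> free_ab FinQuandles"
  using unit_FinQuandles by (simp add: free_ab_iff)

lemma add_free: "f \<in> free_ab C \<Longrightarrow> g \<in> free_ab C \<Longrightarrow> f + g \<in> free_ab C"
  using supp_add by (simp add: free_ab_iff) blast

lemma cls_eq2: "f - g \<in> relsub C \<Longrightarrow> cls C g = cls C f"
  using cls_eq by metis

lemma rel_add: "a - a' \<in> relsub C \<Longrightarrow> b - b' \<in> relsub C \<Longrightarrow> (a + b) - (a' + b') \<in> relsub C"
proof -
  assume "a - a' \<in> relsub C" "b - b' \<in> relsub C"
  then have "(a - a') + (b - b') \<in> relsub C" by (rule relsub_add)
  then show ?thesis by (simp add: algebra_simps)
qed

theorem proposition3p18:
  shows "\<exists>\<phi> \<psi>. \<phi> \<in> ring_hom B_Q B_R \<and> \<psi> \<in> ring_hom B_R B_Q \<and>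
           (\<forall>x\<in>carrier B_Q. \<psi> (\<phi> x) = x)"
proof (intro exI conjI)
  define \<phi> where "\<phi> = (\<lambda>X. cls FinRacks (rep X))"
  define \<psi> where "\<psi> = (\<lambda>X. cls FinQuandles (push (rep X)))"
  let ?Q = FinQuandles and ?R = FinRacks
  have QR: "\<And>f. f \<in> relsub ?Q \<Longrightarrow> f \<in> relsub ?R" using relsub_mono FinQuandles_sub by blast
  show "\<phi> \<in> ring_hom B_Q B_R"
  proof (rule ring_hom_memI)
    fix X assume "X \<in> carrier B_Q"
    then show "\<phi> X \<in> carrier B_R" using rep_carrier(1) free_mono by (auto simp: \<phi>_def carrier_B)
  next
    fix X Y assume X: "X \<in> carrier B_Q" and Y: "Y \<in> carrier B_Q"
    let ?x = "rep X" and ?y = "rep Y"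
    have x: "?x \<in> free_ab ?Q" and y: "?y \<in> free_ab ?Q" using X Y rep_carrier by auto
    have xR: "?x \<in> free_ab ?R" and yR: "?y \<in> free_ab ?R" using x y free_mono by auto
    let ?x' = "rep (cls ?R ?x)" and ?y' = "rep (cls ?R ?y)"
    have x': "?x' \<in> free_ab ?R" "?x - ?x' \<in> relsub ?R" using rep_cls[OF xR] by auto
    have y': "?y' \<in> free_ab ?R" "?y - ?y' \<in> relsub ?R" using rep_cls[OF yR] by auto
    have h: "conv ?x ?y \<in> free_ab ?Q" by (rule conv_free[OF closed_Q x y])
    have "\<phi> (X \<otimes>\<^bsub>B_Q\<^esub> Y) = cls ?R (rep (cls ?Q (conv ?x ?y)))" by (simp add: \<phi>_def mult_B)
    also have "\<dots> = cls ?R (conv ?x ?y)" using rep_cls(2)[OF h] QR cls_eq2 by metis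
    also have "\<dots> = cls ?R (conv ?x' ?y')"
      by (rule cls_eq, rule conv_cong[OF closed_R xR x'(1) yR y'(1) x'(2) y'(2)])
    also have "\<dots> = \<phi> X \<otimes>\<^bsub>B_R\<^esub> \<phi> Y" by (simp add: \<phi>_def mult_B)
    finally show "\<phi> (X \<otimes>\<^bsub>B_Q\<^esub> Y) = \<phi> X \<otimes>\<^bsub>B_R\<^esub> \<phi> Y" .
    have h2: "?x + ?y \<in> free_ab ?Q" by (rule add_free[OF x y])
    have "\<phi> (X \<oplus>\<^bsub>B_Q\<^esub> Y) = cls ?R (rep (cls ?Q (?x + ?y)))" by (simp add: \<phi>_def add_B)
    also have "\<dots> = cls ?R (?x + ?y)" using rep_cls(2)[OF h2] QR cls_eq2 by metis
    also have "\<dots> = cls ?R (?x' + ?y')"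
      by (rule cls_eq, rule rel_add[OF x'(2) y'(2)])
    also have "\<dots> = \<phi> X \<oplus>\<^bsub>B_R\<^esub> \<phi> Y" by (simp add: \<phi>_def add_B)
    finally show "\<phi> (X \<oplus>\<^bsub>B_Q\<^esub> Y) = \<phi> X \<oplus>\<^bsub>B_R\<^esub> \<phi> Y" .
  next
    show "\<phi> \<one>\<^bsub>B_Q\<^esub> = \<one>\<^bsub>B_R\<^esub>"
      using rep_cls(2)[OF gen_unit_free] QR cls_eq2 by (metis \<phi>_def one_B)
  qed
  show "\<psi> \<in> ring_hom B_R B_Q"
  proof (rule ring_hom_memI)
    fix X assume "X \<in> carrier B_R"
    then show "\<psi> X \<in> carrier B_Q" using rep_carrier(1) push_free by (auto simp: \<psi>_def carrier_B)
  next
    fix X Y assume X: "X \<in> carrier B_R" and Y: "Y \<in> carrier B_R"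
    let ?x = "rep X" and ?y = "rep Y"
    have x: "?x \<in> free_ab ?R" and y: "?y \<in> free_ab ?R" using X Y rep_carrier by auto
    have fx: "fs ?x" "fs ?y" using x y by (auto simp: free_ab_iff)
    have px: "push ?x \<in> free_ab ?Q" and py: "push ?y \<in> free_ab ?Q" using x y push_free by auto
    let ?x' = "rep (cls ?Q (push ?x))" and ?y' = "rep (cls ?Q (push ?y))"
    have x': "?x' \<in> free_ab ?Q" "push ?x - ?x' \<in> relsub ?Q" using rep_cls[OF px] by auto
    have y': "?y' \<in> free_ab ?Q" "push ?y - ?y' \<in> relsub ?Q" using rep_cls[OF py] by auto
    have h: "conv ?x ?y \<in> free_ab ?R" by (rule conv_free[OF closed_R x y])
    let ?h' = "rep (cls ?R (conv ?x ?y))"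
    have h': "?h' \<in> free_ab ?R" "conv ?x ?y - ?h' \<in> relsub ?R" using rep_cls[OF h] by auto
    have "push (conv ?x ?y) - push ?h' \<in> relsub ?Q"
      using push_relsub[OF h'(2)] push_diff h' h by (simp add: free_ab_iff)
    then have "\<psi> (X \<otimes>\<^bsub>B_R\<^esub> Y) = cls ?Q (push (conv ?x ?y))"
      by (simp add: \<psi>_def mult_B cls_eq2)
    also have "\<dots> = cls ?Q (conv (push ?x) (push ?y))" using push_conv fx by simp
    also have "\<dots> = cls ?Q (conv ?x' ?y')"
      by (rule cls_eq, rule conv_cong[OF closed_Q px x'(1) py y'(1) x'(2) y'(2)])
    also have "\<dots> = \<psi> X \<otimes>\<^bsub>B_Q\<^esub> \<psi> Y" by (simp add: \<psi>_def mult_B)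
    finally show "\<psi> (X \<otimes>\<^bsub>B_R\<^esub> Y) = \<psi> X \<otimes>\<^bsub>B_Q\<^esub> \<psi> Y" .
    have h2: "?x + ?y \<in> free_ab ?R" by (rule add_free[OF x y])
    let ?k' = "rep (cls ?R (?x + ?y))"
    have k': "?k' \<in> free_ab ?R" "(?x + ?y) - ?k' \<in> relsub ?R" using rep_cls[OF h2] by auto
    have "push (?x + ?y) - push ?k' \<in> relsub ?Q"
      using push_relsub[OF k'(2)] push_diff k' h2 by (simp add: free_ab_iff)
    then have "\<psi> (X \<oplus>\<^bsub>B_R\<^esub> Y) = cls ?Q (push (?x + ?y))"
      by (simp add: \<psi>_def add_B cls_eq2)
    also have "\<dots> = cls ?Q (push ?x + push ?y)" using push_add fx by simp
    also have "\<dots> = cls ?Q (?x' + ?y')"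
      by (rule cls_eq, rule rel_add[OF x'(2) y'(2)])
    also have "\<dots> = \<psi> X \<oplus>\<^bsub>B_Q\<^esub> \<psi> Y" by (simp add: \<psi>_def add_B)
    finally show "\<psi> (X \<oplus>\<^bsub>B_R\<^esub> Y) = \<psi> X \<oplus>\<^bsub>B_Q\<^esub> \<psi> Y" .
  next
    have u: "gen unit_rack \<in> free_ab ?R" using gen_unit_free free_mono by auto
    let ?u' = "rep (cls ?R (gen unit_rack))"
    have u': "?u' \<in> free_ab ?R" "gen unit_rack - ?u' \<in> relsub ?R" using rep_cls[OF u] by auto
    have "push (gen unit_rack) - push ?u' \<in> relsub ?Q"
      using push_relsub[OF u'(2)] push_diff u' u by (simp add: free_ab_iff)
    then show "\<psi> \<one>\<^bsub>B_R\<^esub> = \<one>\<^bsub>B_Q\<^esub>"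
      by (simp add: \<psi>_def one_B cls_eq2 push_gen Fix_unit)
  qed
  show "\<forall>X\<in>carrier B_Q. \<psi> (\<phi> X) = X"
  proof
    fix X assume X: "X \<in> carrier B_Q"
    let ?x = "rep X"
    have x: "?x \<in> free_ab ?Q" "cls ?Q ?x = X" using X rep_carrier by auto
    have xR: "?x \<in> free_ab ?R" using x free_mono by auto
    let ?x' = "rep (cls ?R ?x)"
    have x': "?x' \<in> free_ab ?R" "?x - ?x' \<in> relsub ?R" using rep_cls[OF xR] by auto
    have "push ?x - push ?x' \<in> relsub ?Q"
      using push_relsub[OF x'(2)] push_diff x' xR by (simp add: free_ab_iff)
    then have "\<psi> (\<phi> X) = cls ?Q (push ?x)" by (simp add: \<psi>_def \<phi>_def cls_eq2)
    also have "\<dots> = X" using push_quandle[OF x(1)] x(2) by simp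
    finally show "\<psi> (\<phi> X) = X" .
  qed
qed

end
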